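(* Let $\mathfrak{g}$ be a finite-dimensional complex Lie algebra and let $x\cdot y=[\phi(x),y]$ be a nil-inner CPA-structure on $\mathfrak{g}$, where $\phi:\mathfrak{g}\to\mathfrak{g}$ is a nilpotent Lie algebra homomorphism. Then $\phi(\mathfrak{g})\subseteq\mathrm{nil}(\mathfrak{g})$ and $\mathrm{fix}(\mathfrak{g})\subseteq\ker(\phi)$.
   Context: A CPA-structure on $\mathfrak{g}$ is a bilinear product $x\cdot y$ satisfying, for all $x,y,z$: $x\cdot y=y\cdot x$; $[x,y]\cdot z=x\cdot(y\cdot z)-y\cdot(x\cdot z)$; $x\cdot[y,z]=[x\cdot y,z]+[y,x\cdot z]$. $\mathrm{nil}(\mathfrak{g})$ is the nilradical of $\mathfrak{g}$. $\mathrm{fix}(\mathfrak{g})$ is the Lie ideal of $\mathfrak{g}$ generated by $\{x\in\mathfrak{g}\mid\mathrm{ad}(y)x=x\text{ for some }y\in\mathfrak{g}\}$. *)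

theory Defs
  imports Main "HOL-Analysis.Analysis"
begin

text \<open>A complex vector space is modelled by a type 'g of class ab_group_add
together with a scalar multiplication smul :: complex => 'g => 'g satisfying
the vector_space axioms (HOL Vector_Spaces).\<close>

definition fin_dim :: "(complex \<Rightarrow> 'g::ab_group_add \<Rightarrow> 'g) \<Rightarrow> bool" where
  "fin_dim smul \<longleftrightarrow> (\<exists>B. finite B \<and> module.span smul B = UNIV)"

definition lie_algebra :: "(complex \<Rightarrow> 'g::ab_group_add \<Rightarrow> 'g) \<Rightarrow> ('g \<Rightarrow> 'g \<Rightarrow> 'g) \<Rightarrow> bool" where
  "lie_algebra smul br \<longleftrightarrow>
     vector_space smul \<and>
     (\<forall>x. Vector_Spaces.linear smul smul (br x)) \<and>
     (\<forall>y. Vector_Spaces.linear smul smul (\<lambda>x. br x y)) \<and>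
     (\<forall>x. br x x = 0) \<and>
     (\<forall>x y z. br x (br y z) + br y (br z x) + br z (br x y) = 0)"

definition lie_hom :: "(complex \<Rightarrow> 'g::ab_group_add \<Rightarrow> 'g) \<Rightarrow> ('g \<Rightarrow> 'g \<Rightarrow> 'g) \<Rightarrow> ('g \<Rightarrow> 'g) \<Rightarrow> bool" where
  "lie_hom smul br \<phi> \<longleftrightarrow>
     Vector_Spaces.linear smul smul \<phi> \<and> (\<forall>x y. \<phi> (br x y) = br (\<phi> x) (\<phi> y))"

definition nilpotent_map :: "('g::zero \<Rightarrow> 'g) \<Rightarrow> bool" where
  "nilpotent_map \<phi> \<longleftrightarrow> (\<exists>n. (\<phi> ^^ n) = (\<lambda>_. 0))"

definition cpa_structure :: "(complex \<Rightarrow> 'g::ab_group_add \<Rightarrow> 'g) \<Rightarrow> ('g \<Rightarrow> 'g \<Rightarrow> 'g) \<Rightarrow> ('g \<Rightarrow> 'g \<Rightarrow> 'g) \<Rightarrow> bool" where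
  "cpa_structure smul br cpa_mult \<longleftrightarrow>
     (\<forall>x. Vector_Spaces.linear smul smul (cpa_mult x)) \<and>
     (\<forall>y. Vector_Spaces.linear smul smul (\<lambda>x. cpa_mult x y)) \<and>
     (\<forall>x y. cpa_mult x y = cpa_mult y x) \<and>
     (\<forall>x y z. cpa_mult (br x y) z = cpa_mult x (cpa_mult y z) - cpa_mult y (cpa_mult x z)) \<and>
     (\<forall>x y z. cpa_mult x (br y z) = br (cpa_mult x y) z + br y (cpa_mult x z))"

definition lie_ideal :: "(complex \<Rightarrow> 'g::ab_group_add \<Rightarrow> 'g) \<Rightarrow> ('g \<Rightarrow> 'g \<Rightarrow> 'g) \<Rightarrow> 'g set \<Rightarrow> bool" where
  "lie_ideal smul br I \<longleftrightarrow> module.subspace smul I \<and> (\<forall>x y. y \<in> I \<longrightarrow> br x y \<in> I)"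

fun lcs :: "(complex \<Rightarrow> 'g::ab_group_add \<Rightarrow> 'g) \<Rightarrow> ('g \<Rightarrow> 'g \<Rightarrow> 'g) \<Rightarrow> 'g set \<Rightarrow> nat \<Rightarrow> 'g set" where
  "lcs smul br I 0 = I"
| "lcs smul br I (Suc k) = module.span smul {br x y | x y. x \<in> I \<and> y \<in> lcs smul br I k}"

definition nilpotent_ideal :: "(complex \<Rightarrow> 'g::ab_group_add \<Rightarrow> 'g) \<Rightarrow> ('g \<Rightarrow> 'g \<Rightarrow> 'g) \<Rightarrow> 'g set \<Rightarrow> bool" where
  "nilpotent_ideal smul br I \<longleftrightarrow> lie_ideal smul br I \<and> (\<exists>k. lcs smul br I k = {0})"

definition nilradical :: "(complex \<Rightarrow> 'g::ab_group_add \<Rightarrow> 'g) \<Rightarrow> ('g \<Rightarrow> 'g \<Rightarrow> 'g) \<Rightarrow> 'g set" where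
  "nilradical smul br = module.span smul (\<Union> {I. nilpotent_ideal smul br I})"

definition fix_ideal :: "(complex \<Rightarrow> 'g::ab_group_add \<Rightarrow> 'g) \<Rightarrow> ('g \<Rightarrow> 'g \<Rightarrow> 'g) \<Rightarrow> 'g set" where
  "fix_ideal smul br = \<Inter> {I. lie_ideal smul br I \<and> {x. \<exists>y. br y x = x} \<subseteq> I}"

end

theory Submission
  imports Defs
begin

locale cpan =
  fixes smul :: "complex \<Rightarrow> 'g::ab_group_add \<Rightarrow> 'g"
    and br :: "'g \<Rightarrow> 'g \<Rightarrow> 'g"
    and phi :: "'g \<Rightarrow> 'g"
  assumes M: "module smul"
  and bladd: "\<And>a b c. br (a+b) c = br a c + br b c"
  and braddr: "\<And>a b c. br c (a+b) = br c a + br c b"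
  and blsc: "\<And>s a c. br (smul s a) c = smul s (br a c)"
  and anti: "\<And>a b. br a b = - br b a"
  and jac: "\<And>x y z. br x (br y z) + br y (br z x) + br z (br x y) = 0"
  and padd: "\<And>a b. phi (a+b) = phi a + phi b"
  and psc: "\<And>s a. phi (smul s a) = smul s (phi a)"
  and pbr: "\<And>a b. phi (br a b) = br (phi a) (phi b)"
  and comm: "\<And>a b. br (phi a) b = br (phi b) a"
begin

lemma br0l[simp]: "br 0 c = 0"
  using bladd[of 0 0 c] by simp

lemma br0r[simp]: "br c 0 = 0"
  using braddr[of c 0 0] by simp

lemma brnegl: "br (- a) c = - br a c"
  using bladd[of a "-a" c] by (simp add: eq_neg_iff_add_eq_0 add.commute)

lemma brnegr: "br c (- a) = - br c a"
  using braddr[of c a "-a"] by (simp add: eq_neg_iff_add_eq_0 add.commute)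

lemma phi0[simp]: "phi 0 = 0"
  using padd[of 0 0] by simp

lemma phineg: "phi (- a) = - phi a"
  using padd[of a "-a"] by (simp add: eq_neg_iff_add_eq_0 add.commute)

lemma pj0[simp]: "(phi ^^ j) 0 = 0"
  by (induction j) auto

lemma pjadd: "(phi ^^ j) (a + b) = (phi ^^ j) a + (phi ^^ j) b"
  by (induction j) (auto simp: padd)

lemma pjsc: "(phi ^^ j) (smul s a) = smul s ((phi ^^ j) a)"
  by (induction j) (auto simp: psc)

lemma pjneg: "(phi ^^ j) (- a) = - (phi ^^ j) a"
  by (induction j) (auto simp: phineg)

lemma jac2: "br (br y u) v = br y (br u v) + - br u (br y v)"
proof -
  have "br y (br u v) + br u (br v y) + br v (br y u) = 0" by (rule jac)
  moreover have "br v (br y u) = - br (br y u) v" by (rule anti)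
  moreover have "br u (br v y) = - br u (br y v)" using anti[of v y] brnegr by simp
  ultimately show ?thesis by (simp add: algebra_simps eq_neg_iff_add_eq_0)
qed

inductive_set gen :: "nat \<Rightarrow> 'g set" for k :: nat where
  base: "k \<le> m \<Longrightarrow> (phi ^^ m) x \<in> gen k"
| zero: "0 \<in> gen k"
| add: "u \<in> gen k \<Longrightarrow> v \<in> gen k \<Longrightarrow> u + v \<in> gen k"
| scl: "u \<in> gen k \<Longrightarrow> smul c u \<in> gen k"
| neg: "u \<in> gen k \<Longrightarrow> - u \<in> gen k"
| brk: "v \<in> gen k \<Longrightarrow> br y v \<in> gen k"

lemma gen_mono: "v \<in> gen b \<Longrightarrow> a \<le> b \<Longrightarrow> v \<in> gen a"
  by (induction rule: gen.induct) (auto intro: gen.intros)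

lemma pj_br: "(phi ^^ j) (br y v) = br y ((phi ^^ (2*j)) v) \<or>
              (phi ^^ j) (br y v) = - br y ((phi ^^ (2*j)) v)"
proof (induction j)
  case 0 then show ?case by simp
next
  case (Suc j)
  let ?w = "(phi ^^ (2*j)) v"
  have key: "phi (br y w) = - br y (phi (phi w))" for w
    using pbr[of y w] comm[of y "phi w"] anti[of "phi (phi w)" y] by simp
  have e: "(phi ^^ (2 * Suc j)) v = phi (phi ?w)" by simp
  from Suc show ?case
  proof
    assume h: "(phi ^^ j) (br y v) = br y ?w"
    have "(phi ^^ Suc j) (br y v) = - br y (phi (phi ?w))" using h key by simp
    then show ?thesis using e by simp
  next
    assume h: "(phi ^^ j) (br y v) = - br y ?w"
    have "(phi ^^ Suc j) (br y v) = br y (phi (phi ?w))" using h key phineg by simp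
    then show ?thesis using e by simp
  qed
qed

lemma L1: "v \<in> gen k \<Longrightarrow> (phi ^^ j) v \<in> gen (k + j)"
proof (induction arbitrary: j rule: gen.induct)
  case (base m x)
  have "(phi ^^ j) ((phi ^^ m) x) = (phi ^^ (j + m)) x" by (simp add: funpow_add)
  then show ?case using base by (auto intro: gen.base)
next
  case zero then show ?case by (auto intro: gen.intros)
next
  case (add u v) then show ?case by (auto simp: pjadd intro: gen.intros)
next
  case (scl u c) then show ?case by (auto simp: pjsc intro: gen.intros)
next
  case (neg u) then show ?case by (auto simp: pjneg intro: gen.intros)
next
  case (brk v y)
  have "(phi ^^ (2*j)) v \<in> gen (k + 2*j)" by (rule brk.IH)
  then have "(phi ^^ (2*j)) v \<in> gen (k + j)" by (rule gen_mono) simp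
  then have a: "br y ((phi ^^ (2*j)) v) \<in> gen (k + j)" by (rule gen.brk)
  then have "- br y ((phi ^^ (2*j)) v) \<in> gen (k + j)" by (rule gen.neg)
  then show ?case using a pj_br[of j y v] by auto
qed

lemma L2: "u \<in> gen 1 \<Longrightarrow> v \<in> gen b \<Longrightarrow> br u v \<in> gen (Suc b)"
proof (induction arbitrary: b v rule: gen.induct)
  case (base m x)
  then obtain m' where m: "m = Suc m'" by (cases m) auto
  have "(phi ^^ m) x = phi ((phi ^^ m') x)" using m by simp
  then have "br ((phi ^^ m) x) v = - br ((phi ^^ m') x) (phi v)"
    using comm[of "(phi ^^ m') x" v] anti[of "phi v"] by simp
  moreover have "(phi ^^ 1) v \<in> gen (b + 1)" using L1 base by blast
  ultimately show ?case by (auto intro: gen.intros)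
next
  case zero then show ?case by (auto intro: gen.intros)
next
  case (add u1 u2) then show ?case by (auto simp: bladd intro: gen.intros)
next
  case (scl u c) then show ?case by (auto simp: blsc intro: gen.intros)
next
  case (neg u) then show ?case by (auto simp: brnegl intro: gen.intros)
next
  case (brk u y)
  have a: "br u v \<in> gen (Suc b)" using brk by blast
  have "br y v \<in> gen b" using brk.prems by (rule gen.brk)
  then have c: "br u (br y v) \<in> gen (Suc b)" using brk.IH by blast
  have "br y (br u v) + - br u (br y v) \<in> gen (Suc b)"
    by (rule gen.add[OF gen.brk[OF a] gen.neg[OF c]])
  then show ?case unfolding jac2 .
qed

lemma gen_zero:
  assumes n: "(phi ^^ n) = (\<lambda>_. 0)"
  shows "v \<in> gen k \<Longrightarrow> n \<le> k \<Longrightarrow> v = 0"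
proof (induction rule: gen.induct)
  case (base m x)
  have "(phi ^^ m) x = (phi ^^ (m - n)) ((phi ^^ n) x)"
    using base funpow_add[of "m - n" n phi] by simp
  then show ?case using n by simp
next
  case (scl u c) then show ?case
    using module.scale_zero_right[OF M] by simp
qed (auto simp: brnegl)

lemma gen_subspace: "module.subspace smul (gen k)"
  unfolding module.subspace_def[OF M] by (auto intro: gen.intros)

lemma lcs_sub: "lcs smul br (gen 1) k \<subseteq> gen (Suc k)"
proof (induction k)
  case 0 then show ?case by simp
next
  case (Suc k)
  have "{br x y | x y. x \<in> gen 1 \<and> y \<in> lcs smul br (gen 1) k} \<subseteq> gen (Suc (Suc k))"
    using Suc L2 by blast
  then show ?case
    using module.span_minimal[OF M _ gen_subspace] by simp
qed

lemma zero_lcs: "0 \<in> lcs smul br (gen 1) k"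
  by (cases k) (auto intro: gen.zero module.span_zero[OF M])

end

lemma lin_add: "Vector_Spaces.linear s s f \<Longrightarrow> f (a + b) = f a + f b"
  by (rule module_hom.add[OF linear_iff_module_hom[THEN iffD1]])

lemma lin_sc: "Vector_Spaces.linear s s f \<Longrightarrow> f (s c a) = s c (f a)"
  by (rule module_hom.scale[OF linear_iff_module_hom[THEN iffD1]])

theorem lemma4p6:
  fixes smul :: "complex \<Rightarrow> 'g::ab_group_add \<Rightarrow> 'g"
    and br :: "'g \<Rightarrow> 'g \<Rightarrow> 'g"
    and \<phi> :: "'g \<Rightarrow> 'g"
  assumes "lie_algebra smul br"
    and "fin_dim smul"
    and "lie_hom smul br \<phi>"
    and "nilpotent_map \<phi>"
    and "cpa_structure smul br (\<lambda>x y. br (\<phi> x) y)"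
  shows "range \<phi> \<subseteq> nilradical smul br \<and> fix_ideal smul br \<subseteq> {x. \<phi> x = 0}"
proof -
  have LA: "vector_space smul" "\<And>x. Vector_Spaces.linear smul smul (br x)"
    "\<And>y. Vector_Spaces.linear smul smul (\<lambda>x. br x y)" "\<And>x. br x x = 0"
    "\<And>x y z. br x (br y z) + br y (br z x) + br z (br x y) = 0"
    using assms(1) unfolding lie_algebra_def by auto
  have M: "module smul" using LA(1) module_iff_vector_space by blast
  have PH: "Vector_Spaces.linear smul smul \<phi>" "\<And>x y. \<phi> (br x y) = br (\<phi> x) (\<phi> y)"
    using assms(3) unfolding lie_hom_def by auto
  have CM: "\<And>x y. br (\<phi> x) y = br (\<phi> y) x"
    using assms(5) unfolding cpa_structure_def by auto
  have bla: "\<And>a b c. br (a+b) c = br a c + br b c"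
    using lin_add[OF LA(3)] by blast
  have bra: "\<And>a b c. br c (a+b) = br c a + br c b"
    using lin_add[OF LA(2)] by blast
  have anti: "\<And>a b. br a b = - br b a"
  proof -
    fix a b
    have "0 = br (a+b) (a+b)" using LA(4) by simp
    also have "\<dots> = br a a + br b a + (br a b + br b b)" using bla bra by (simp only:)
    also have "\<dots> = br a b + br b a" using LA(4) by simp
    finally show "br a b = - br b a" by (simp add: eq_neg_iff_add_eq_0 add.commute)
  qed
  interpret cpan smul br \<phi>
    by (rule cpan.intro) (rule M bla bra lin_sc[OF LA(3)] anti LA(5) lin_add[OF PH(1)] lin_sc[OF PH(1)] PH(2) CM)+
  obtain n where n: "(\<phi> ^^ n) = (\<lambda>_. 0)" using assms(4) unfolding nilpotent_map_def by blast
  have rg: "range \<phi> \<subseteq> gen 1"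
  proof
    fix y assume "y \<in> range \<phi>"
    then obtain x where "y = (\<phi> ^^ 1) x" by auto
    moreover have "(\<phi> ^^ 1) x \<in> gen 1" by (rule gen.base) simp
    ultimately show "y \<in> gen 1" by simp
  qed
  have ni: "nilpotent_ideal smul br (gen 1)"
    unfolding nilpotent_ideal_def lie_ideal_def
  proof (intro conjI allI impI exI)
    show "module.subspace smul (gen 1)" by (rule gen_subspace)
    show "br x y \<in> gen 1" if "y \<in> gen 1" for x y using that by (rule gen.brk)
    show "lcs smul br (gen 1) n = {0}"
      using lcs_sub[of n] gen_zero[OF n] zero_lcs[of n] by auto
  qed
  have part1: "range \<phi> \<subseteq> nilradical smul br"
    unfolding nilradical_def
    using rg ni module.span_superset[OF M, of "\<Union> {I. nilpotent_ideal smul br I}"] by blast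
  have kid: "lie_ideal smul br {x. \<phi> x = 0}"
    unfolding lie_ideal_def module.subspace_def[OF M]
    using lin_add[OF PH(1)] lin_sc[OF PH(1)] PH(2) module.scale_zero_right[OF M] by auto
  have fx: "\<phi> x = 0" if h: "br y x = x" for x y
  proof -
    have "\<phi> x \<in> gen (Suc b)" for b
    proof (induction b)
      case 0 then show ?case using rg by auto
    next
      case (Suc b)
      have "\<phi> x = br (\<phi> y) (\<phi> x)" using PH(2)[of y x] h by simp
      moreover have "\<phi> y \<in> gen 1" using rg by auto
      ultimately show ?case using L2[OF _ Suc] by metis
    qed
    then show ?thesis using gen_zero[OF n, of "\<phi> x" "Suc n"] by simp
  qed
  have part2: "fix_ideal smul br \<subseteq> {x. \<phi> x = 0}"
    unfolding fix_ideal_def using kid fx by blast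
  show ?thesis using part1 part2 by blast
qed

end
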